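(* Let $f(z)=z+\sum_{n\ge2}a_nz^n$ belong to $\Omega$, let $k\in\{1,2,3,\dots\}$, and set $b_{k+1}=\frac1k a_2$ and $b_{2k+1}=\frac1k a_3-\frac12\frac{k-1}{k^2}a_2^2$ (these are the coefficients of $z^{k+1}$ and $z^{2k+1}$ in the $k$-th root transform $F_k(z)=(f(z^k))^{1/k}=z+\sum_{n\ge1}b_{kn+1}z^{kn+1}$). Then for every $\mu\in\mathbb{C}$, $$\left|b_{2k+1}-\mu b_{k+1}^2\right|\le \frac{1}{4k}\max\left\{1,\left|\frac{2\mu+k-1}{2k}\right|\right\},$$ and the inequality is sharp.
   Context: $\Delta=\{z\in\mathbb{C}:|z|<1\}$. $\mathcal{A}$ is the class of functions $f$ analytic in $\Delta$ with $f(0)=0$, $f'(0)=1$. $\Omega$ is the class of $f\in\mathcal{A}$ with $|zf'(z)-f(z)|<\tfrac12$ for all $z\in\Delta$. *)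

theory Defs
  imports "HOL-Complex_Analysis.Complex_Analysis"
begin

definition class_A :: "(complex \<Rightarrow> complex) set" where
  "class_A = {f. f holomorphic_on ball 0 1 \<and> f 0 = 0 \<and> deriv f 0 = 1}"

definition class_Omega :: "(complex \<Rightarrow> complex) set" where
  "class_Omega = {f \<in> class_A. \<forall>z\<in>ball 0 1. cmod (z * deriv f z - f z) < 1/2}"

definition taylor_coeff :: "(complex \<Rightarrow> complex) \<Rightarrow> nat \<Rightarrow> complex" where
  "taylor_coeff f n = (deriv ^^ n) f 0 / of_nat (fact n)"

end

theory Submission
  imports Defs
begin

lemma coeff_bound:
  fixes w :: "complex \<Rightarrow> complex"
  assumes hol: "w holomorphic_on ball 0 1"
    and bd: "\<And>z. norm z < 1 \<Longrightarrow> norm (w z) < 1"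
    and w0: "w 0 = 0" and w1: "deriv w 0 = 0"
  shows "norm ((deriv^^3) w 0 / 6) + norm ((deriv^^2) w 0 / 2)^2 \<le> 1"
proof -
  define c where "c n = (deriv^^n) w 0 / fact n" for n
  have ser: "(\<lambda>n. c n * z^n) sums w z" if "norm z < 1" for z
    using hol that unfolding holomorphic_iff_power_series c_def by auto
  have c0: "c 0 = 0" and c1: "c 1 = 0" using w0 w1 by (auto simp: c_def)
  have c2: "c 2 = (deriv^^2) w 0 / 2" and c3: "c 3 = (deriv^^3) w 0 / 6"
    by (simp_all add: c_def fact_numeral)
  have ser2: "(\<lambda>n. c (n+2) * z^n) sums (w z / z^2)" if "norm z < 1" "z \<noteq> 0" for z
  proof -
    have "(\<lambda>n. c (Suc (Suc n)) * z^(Suc (Suc n))) sums w z"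
    proof -
      have "(\<lambda>n. c n * z^n) sums (w z + 0 + 0)" using ser[OF that(1)] by simp
      then have "(\<lambda>n. c (Suc n) * z^(Suc n)) sums (w z + 0)"
        using sums_Suc_iff[of "\<lambda>n. c n * z^n" "w z + 0"] c0 by simp
      then show ?thesis
        using sums_Suc_iff[of "\<lambda>n. c (Suc n) * z^(Suc n)" "w z"] c1 by simp
    qed
    then have "(\<lambda>n. c (Suc (Suc n)) * z^(Suc (Suc n)) / z^2) sums (w z / z^2)"
      by (rule sums_divide)
    then show ?thesis using that(2) by (simp add: power2_eq_square)
  qed
  have summ: "summable (\<lambda>n. c (n+2) * z^n)" if "norm z < 1" for z
    using ser2[OF that] sums_summable[of _ 0] by (cases "z = 0") (auto intro: sums_summable)
  have summ': "summable (\<lambda>n. c (Suc (Suc n)) * z^n)" if "norm z < 1" for z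
    using summ[OF that] by simp
  define \<phi> where "\<phi> z = (\<Sum>n. c (n+2) * z^n)" for z
  have phi_eq: "w z = z^2 * \<phi> z" if "norm z < 1" for z
  proof (cases "z = 0")
    case True then show ?thesis using w0 by simp
  next
    case False
    then have "\<phi> z = w z / z^2" using ser2[OF that False] sums_unique unfolding \<phi>_def by metis
    then show ?thesis using False by simp
  qed
  have phi0: "\<phi> 0 = c 2" unfolding \<phi>_def using powser_zero[of "\<lambda>n. c (n+2)"] by (simp add: numeral_2_eq_2)
  have phihol: "\<phi> holomorphic_on ball 0 1"
    by (rule power_series_holomorphic[where a="\<lambda>n. c (n+2)"]) (use summ' in \<open>auto simp: \<phi>_def intro!: summable_sums\<close>)
  have phid: "(\<phi> has_field_derivative c 3) (at 0)"
  proof -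
    have "((\<lambda>z. \<Sum>n. c (n+2) * z^n) has_field_derivative (\<Sum>n. diffs (\<lambda>n. c (n+2)) n * 0^n)) (at 0)"
      by (rule termdiffs_strong'[where K=1]) (use summ' in auto)
    moreover have "(\<Sum>n. diffs (\<lambda>n. c (n+2)) n * 0^n) = c 3"
      using powser_zero[of "diffs (\<lambda>n. c (n+2))"] by (simp add: diffs_def numeral_3_eq_3)
    ultimately show ?thesis unfolding \<phi>_def[abs_def] by simp
  qed
  have schw_w: "norm z * norm (\<phi> z) \<le> 1" if "norm z < 1" for z
  proof (cases "z = 0")
    case False
    have "norm (w z) \<le> norm z" by (rule Schwarz_Lemma(1)[OF hol w0 bd that])
    then have "norm z * (norm z * norm (\<phi> z)) \<le> norm z * 1"
      using phi_eq[OF that] by (simp add: norm_mult norm_power power2_eq_square mult.assoc)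
    then show ?thesis using False by (simp add: mult_le_cancel_left)
  qed simp
  have key: "s^2 * norm (c 3) + s^4 * norm (c 2)^2 \<le> 1" if s: "0 < s" "s < 1" for s :: real
  proof -
    define g where "g z = of_real s * (z * \<phi> z)" for z
    have ghol: "g holomorphic_on ball 0 1" unfolding g_def by (intro holomorphic_intros phihol)
    have gbd: "norm (g z) < 1" if "norm z < 1" for z
    proof -
      have "norm (g z) = s * (norm z * norm (\<phi> z))" using s by (simp add: g_def norm_mult)
      also have "\<dots> \<le> s * 1" using schw_w[OF that] s by (intro mult_left_mono) auto
      finally show ?thesis using s by simp
    qed
    have g0: "g 0 = 0" by (simp add: g_def)
    have sphi: "s * norm (\<phi> z) \<le> 1" if "norm z < 1" for z
    proof (cases "z = 0")
      case True
      have "(g has_field_derivative of_real s * (0 * deriv \<phi> 0 + \<phi> 0)) (at 0)"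
        unfolding g_def using phid
        by (auto intro!: derivative_eq_intros simp: DERIV_imp_deriv)
      then have "deriv g 0 = of_real s * \<phi> 0" by (simp add: DERIV_imp_deriv)
      moreover have "norm (deriv g 0) \<le> 1" by (rule Schwarz_Lemma(2)[OF ghol g0 gbd, of 0]) auto
      ultimately show ?thesis using True s by (simp add: norm_mult)
    next
      case False
      have "norm (g z) \<le> norm z" by (rule Schwarz_Lemma(1)[OF ghol g0 gbd that])
      then have "norm z * (s * norm (\<phi> z)) \<le> norm z * 1" using s by (simp add: g_def norm_mult algebra_simps)
      then show ?thesis using False by (simp add: mult_le_cancel_left)
    qed
    define \<Phi> where "\<Phi> z = of_real (s^2) * \<phi> z" for z
    have Phibd: "norm (\<Phi> z) < 1" if "norm z < 1" for z
    proof -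
      have "norm (\<Phi> z) = s * (s * norm (\<phi> z))" using s by (simp add: \<Phi>_def norm_mult power2_eq_square)
      also have "\<dots> \<le> s * 1" using sphi[OF that] s by (intro mult_left_mono) auto
      finally show ?thesis using s by simp
    qed
    define a where "a = \<Phi> 0"
    have a: "norm a < 1" using Phibd[of 0] by (simp add: a_def)
    have a_eq: "a = of_real (s^2) * c 2" by (simp add: a_def \<Phi>_def phi0)
    have den: "1 - cnj a * \<Phi> z \<noteq> 0" if "norm z < 1" for z
    proof
      assume "1 - cnj a * \<Phi> z = 0"
      then have "norm (cnj a * \<Phi> z) = 1" by (metis norm_one right_minus_eq)
      moreover have "norm (cnj a * \<Phi> z) < 1" using a Phibd[OF that]
        by (simp add: norm_mult) (metis mult_strict_mono' norm_ge_zero mult_1_right less_le_trans mult_less_cancel_left1 not_le)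
      ultimately show False by simp
    qed
    define \<psi> where "\<psi> z = (\<Phi> z - a) / (1 - cnj a * \<Phi> z)" for z
    have Phihol: "\<Phi> holomorphic_on ball 0 1" unfolding \<Phi>_def by (intro holomorphic_intros phihol)
    have psihol: "\<psi> holomorphic_on ball 0 1" unfolding \<psi>_def
      using den by (intro holomorphic_intros Phihol) auto
    have psibd: "norm (\<psi> z) < 1" if "norm z < 1" for z
      using Moebius_function_norm_lt_1[OF a Phibd[OF that], of 0]
      by (simp add: Moebius_function_simple \<psi>_def)
    have psi0: "\<psi> 0 = 0" by (simp add: \<psi>_def a_def)
    have Phid: "(\<Phi> has_field_derivative of_real (s^2) * c 3) (at 0)"
      unfolding \<Phi>_def[abs_def] by (rule DERIV_cmult[OF phid])
    have den0: "1 - cnj a * a \<noteq> 0" using den[of 0] by (simp add: a_def)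
    have n: "((\<lambda>z. \<Phi> z - a) has_field_derivative of_real (s^2) * c 3) (at 0)"
      using DERIV_diff[OF Phid DERIV_const[of a]] by simp
    have d: "((\<lambda>z. 1 - cnj a * \<Phi> z) has_field_derivative - (cnj a * (of_real (s^2) * c 3))) (at 0)"
      using DERIV_diff[OF DERIV_const[of 1] DERIV_cmult[OF Phid, of "cnj a"]] by simp
    have "(\<psi> has_field_derivative
        ((of_real (s^2) * c 3) * (1 - cnj a * \<Phi> 0) - (\<Phi> 0 - a) * (- (cnj a * (of_real (s^2) * c 3))))
          / ((1 - cnj a * \<Phi> 0) * (1 - cnj a * \<Phi> 0))) (at 0)"
      unfolding \<psi>_def[abs_def] using den[of 0] by (intro DERIV_divide[OF n d]) auto
    then have "deriv \<psi> 0 = (of_real (s^2) * c 3) / (1 - cnj a * a)"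
      using den0 by (simp add: DERIV_imp_deriv a_def power2_eq_square)
    moreover have "norm (deriv \<psi> 0) \<le> 1" by (rule Schwarz_Lemma(2)[OF psihol psi0 psibd, of 0]) auto
    moreover have "cnj a * a = of_real (norm a ^ 2)" using complex_norm_square[of a] by (simp add: mult.commute)
    ultimately have "norm ((of_real (s^2) * c 3) / of_real (1 - norm a ^ 2)) \<le> 1"
      by simp
    moreover have pos: "0 < 1 - norm a ^ 2" using a
      by (simp add: power2_eq_square) (metis mult_le_one norm_ge_zero less_le_not_le less_eq_real_def mult_strict_mono' mult_1_right zero_less_one)
    moreover have nn: "norm (of_real (1 - norm a ^ 2) :: complex) = 1 - norm a ^ 2"
      using pos by (simp only: norm_of_real)
    ultimately have "norm (of_real (s^2) * c 3) / (1 - norm a ^ 2) \<le> 1"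
      by (simp only: norm_divide nn)
    then have "norm (of_real (s^2) * c 3) \<le> 1 - norm a ^ 2"
      using pos by (simp add: divide_le_eq)
    then show ?thesis using s by (simp add: a_eq norm_mult norm_power power_mult_distrib)
  qed
  have "norm (c 3) + norm (c 2)^2 \<le> 1"
  proof (rule tendsto_upperbound)
    show "((\<lambda>s::real. s^2 * norm (c 3) + s^4 * norm (c 2)^2) \<longlongrightarrow> norm (c 3) + norm (c 2)^2) (at_left 1)"
      by (auto intro!: tendsto_eq_intros)
    show "\<forall>\<^sub>F s in at_left 1. s^2 * norm (c 3) + s^4 * norm (c 2)^2 \<le> 1"
    proof -
      have "eventually (\<lambda>x. x \<in> {0<..<1}) (at_left (1::real))" by (rule eventually_at_left_real) simp
      then show ?thesis by (rule eventually_mono) (auto intro: key)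
    qed
  qed (simp add: trivial_limit_at_left_real)
  then show ?thesis using c2 c3 by simp
qed
lemma hd_w:
  assumes hol: "f holomorphic_on ball 0 1"
  shows "(deriv^^n) (\<lambda>z. 2 * (z * deriv f z - f z)) 0 = 2 * (of_nat n * (deriv^^n) f 0 - (deriv^^n) f 0)"
proof -
  have dh: "deriv f holomorphic_on ball 0 1" using hol by (intro holomorphic_deriv) auto
  have ih: "(\<lambda>z. z) holomorphic_on ball 0 1" by simp
  have mh: "(\<lambda>z. z * deriv f z) holomorphic_on ball 0 1" using dh hol by (intro holomorphic_intros) auto
  have dfh: "(\<lambda>z. z * deriv f z - f z) holomorphic_on ball 0 1" using dh hol by (intro holomorphic_intros) auto
  have "(deriv^^n) (\<lambda>z. 2 * (z * deriv f z - f z)) 0 = 2 * (deriv^^n) (\<lambda>z. z * deriv f z - f z) 0"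
    by (rule higher_deriv_cmult[OF dfh]) auto
  also have "(deriv^^n) (\<lambda>z. z * deriv f z - f z) 0 = (deriv^^n) (\<lambda>z. z * deriv f z) 0 - (deriv^^n) f 0"
    by (rule higher_deriv_diff[OF mh hol]) auto
  also have "(deriv^^n) (\<lambda>z. z * deriv f z) 0 = (\<Sum>i = 0..n. of_nat (n choose i) * (deriv ^^ i) (\<lambda>z. z) 0 * (deriv ^^ (n-i)) (deriv f) 0)"
    by (rule higher_deriv_mult[OF ih dh]) auto
  also have "\<dots> = of_nat n * (deriv^^n) f 0"
  proof (cases n)
    case 0 then show ?thesis by simp
  next
    case (Suc m)
    have "(\<Sum>i = 0..n. of_nat (n choose i) * (deriv ^^ i) (\<lambda>z. z) 0 * (deriv ^^ (n-i)) (deriv f) 0)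
        = (\<Sum>i = 0..n. if i = 1 then of_nat n * (deriv ^^ m) (deriv f) 0 else 0)"
      by (rule sum.cong) (auto simp: Suc)
    also have "\<dots> = of_nat n * (deriv ^^ m) (deriv f) 0" using Suc by simp
    also have "(deriv ^^ m) (deriv f) = (deriv^^n) f" using Suc by (simp only: funpow_Suc_right comp_def)
    finally show ?thesis .
  qed
  finally show ?thesis .
qed

lemma omega_bound:
  assumes "f \<in> class_Omega"
  shows "norm (taylor_coeff f 3) + norm (taylor_coeff f 2)^2 \<le> 1/4"
proof -
  have hol: "f holomorphic_on ball 0 1" and f0: "f 0 = 0" and d1: "deriv f 0 = 1"
    and bd: "\<And>z. z \<in> ball 0 1 \<Longrightarrow> cmod (z * deriv f z - f z) < 1/2"
    using assms by (auto simp: class_Omega_def class_A_def)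
  define w where "w z = 2 * (z * deriv f z - f z)" for z
  have dh: "deriv f holomorphic_on ball 0 1" using hol by (intro holomorphic_deriv) auto
  have wh: "w holomorphic_on ball 0 1" unfolding w_def using dh hol by (intro holomorphic_intros) auto
  have wb: "norm (w z) < 1" if "norm z < 1" for z
    using bd[of z] that unfolding w_def norm_mult by simp
  have w0: "w 0 = 0" by (simp add: w_def f0)
  have hw: "(deriv^^n) w 0 = 2 * (of_nat n * (deriv^^n) f 0 - (deriv^^n) f 0)" for n
    unfolding w_def[abs_def] by (rule hd_w[OF hol])
  have w1: "deriv w 0 = 0" using hw[of 1] by simp
  have "norm ((deriv^^3) w 0 / 6) + norm ((deriv^^2) w 0 / 2)^2 \<le> 1"
    by (rule coeff_bound[OF wh wb w0 w1])
  moreover have "(deriv^^3) w 0 / 6 = 4 * taylor_coeff f 3"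
    by (simp add: hw taylor_coeff_def fact_numeral)
  moreover have "(deriv^^2) w 0 / 2 = 2 * taylor_coeff f 2"
    by (simp add: hw taylor_coeff_def fact_numeral)
  ultimately show ?thesis by (simp add: norm_mult power_mult_distrib)
qed
lemma real_ineq:
  fixes A B N :: real
  assumes "0 \<le> A" "0 \<le> B" "0 \<le> N" "B + A \<le> 1/4"
  shows "B + N * A \<le> max 1 N / 4"
proof (cases "N \<le> 1")
  case True
  have "N * A \<le> 1 * A" using True assms by (intro mult_right_mono) auto
  then show ?thesis using assms True by simp
next
  case False
  have "(N - 1) * A \<le> (N - 1) * (1/4)" using False assms by (intro mult_left_mono) auto
  then show ?thesis using assms False by (simp add: algebra_simps)
qed

lemma b_identity:
  fixes a2 a3 \<mu> :: complex and k :: nat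
  assumes "k \<ge> 1"
  shows "a3 / of_nat k - (1/2) * (of_nat k - 1) / (of_nat k)^2 * a2^2 - \<mu> * (a2 / of_nat k)^2
     = (a3 - ((2 * \<mu> + of_nat k - 1) / (2 * of_nat k)) * a2^2) / of_nat k"
  using assms by (simp add: field_simps power2_eq_square)

definition ex1 :: "complex \<Rightarrow> complex" where "ex1 z = z + z^2/2"
definition ex2 :: "complex \<Rightarrow> complex" where "ex2 z = z + z^3/4"

lemma ex1_d1: "deriv ex1 = (\<lambda>z. 1 + z)"
  by (rule ext, rule DERIV_imp_deriv) (auto simp: ex1_def[abs_def] intro!: derivative_eq_intros)
lemma ex1_d2: "deriv (\<lambda>z. 1 + z) = (\<lambda>z::complex. 1)"
  by (rule ext, rule DERIV_imp_deriv) (auto intro!: derivative_eq_intros)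
lemma ex1_tc: "taylor_coeff ex1 2 = 1/2" "taylor_coeff ex1 3 = 0"
proof -
  have a0: "(deriv^^2) ex1 = deriv (deriv ex1)" by (simp add: numeral_2_eq_2)
  have a: "(deriv^^2) ex1 = (\<lambda>z. 1)" unfolding a0 by (simp only: ex1_d1 ex1_d2)
  have b0: "(deriv^^3) ex1 = deriv (deriv (deriv ex1))" by (simp add: numeral_3_eq_3)
  have b: "(deriv^^3) ex1 = (\<lambda>z. 0)" unfolding b0 by (simp only: ex1_d1 ex1_d2 deriv_const)
  show "taylor_coeff ex1 2 = 1/2" "taylor_coeff ex1 3 = 0" by (simp_all add: taylor_coeff_def a b fact_numeral)
qed

lemma ex2_d1: "deriv ex2 = (\<lambda>z. 1 + 3 * z^2 / 4)"
  by (rule ext, rule DERIV_imp_deriv) (auto simp: ex2_def[abs_def] intro!: derivative_eq_intros)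
lemma ex2_d2: "deriv (\<lambda>z. 1 + 3 * z^2 / 4) = (\<lambda>z::complex. 3 * z / 2)"
  by (rule ext, rule DERIV_imp_deriv) (auto intro!: derivative_eq_intros)
lemma ex2_d3: "deriv (\<lambda>z. 3 * z / 2) = (\<lambda>z::complex. 3 / 2)"
  by (rule ext, rule DERIV_imp_deriv) (auto intro!: derivative_eq_intros)
lemma ex2_tc: "taylor_coeff ex2 2 = 0" "taylor_coeff ex2 3 = 1/4"
proof -
  have a0: "(deriv^^2) ex2 = deriv (deriv ex2)" by (simp add: numeral_2_eq_2)
  have a: "(deriv^^2) ex2 = (\<lambda>z. 3 * z / 2)" unfolding a0 by (simp only: ex2_d1 ex2_d2)
  have b0: "(deriv^^3) ex2 = deriv (deriv (deriv ex2))" by (simp add: numeral_3_eq_3)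
  have b: "(deriv^^3) ex2 = (\<lambda>z. 3 / 2)" unfolding b0 by (simp only: ex2_d1 ex2_d2 ex2_d3)
  show "taylor_coeff ex2 2 = 0" "taylor_coeff ex2 3 = 1/4" by (simp_all add: taylor_coeff_def a b fact_numeral)
qed

lemma ex1_Omega: "ex1 \<in> class_Omega"
proof -
  have "norm (z * deriv ex1 z - ex1 z) < 1/2" if "norm z < 1" for z
  proof -
    have e: "z * deriv ex1 z - ex1 z = z^2/2" by (simp add: ex1_d1 ex1_def algebra_simps power2_eq_square)
    moreover have "norm z ^ 2 < 1" using that by (simp add: power_less_one_iff)
    ultimately show ?thesis by (simp only: e) (simp add: norm_divide norm_power)
  qed
  moreover have "ex1 holomorphic_on ball 0 1" unfolding ex1_def[abs_def] by (intro holomorphic_intros) auto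
  ultimately show ?thesis by (auto simp: class_Omega_def class_A_def ex1_d1 ex1_def)
qed

lemma ex2_Omega: "ex2 \<in> class_Omega"
proof -
  have "norm (z * deriv ex2 z - ex2 z) < 1/2" if "norm z < 1" for z
  proof -
    have e: "z * deriv ex2 z - ex2 z = z^3/2" by (simp add: ex2_d1 ex2_def algebra_simps power3_eq_cube power2_eq_square)
    moreover have "norm z ^ 3 < 1" using that by (simp add: power_less_one_iff)
    ultimately show ?thesis by (simp only: e) (simp add: norm_divide norm_power)
  qed
  moreover have "ex2 holomorphic_on ball 0 1" unfolding ex2_def[abs_def] by (intro holomorphic_intros) auto
  ultimately show ?thesis by (auto simp: class_Omega_def class_A_def ex2_d1 ex2_def)
qed

theorem theorem6p1:
  fixes k :: nat and \<mu> :: complex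
  assumes "k \<ge> 1"
  shows "(\<forall>f\<in>class_Omega.
           let a2 = taylor_coeff f 2; a3 = taylor_coeff f 3;
               b1 = a2 / of_nat k;
               b2 = a3 / of_nat k - (1/2) * (of_nat k - 1) / (of_nat k)^2 * a2^2
           in cmod (b2 - \<mu> * b1^2)
                \<le> 1 / (4 * real k) * max 1 (cmod ((2 * \<mu> + of_nat k - 1) / (2 * of_nat k))))
       \<and> (\<exists>f\<in>class_Omega.
           let a2 = taylor_coeff f 2; a3 = taylor_coeff f 3;
               b1 = a2 / of_nat k;
               b2 = a3 / of_nat k - (1/2) * (of_nat k - 1) / (of_nat k)^2 * a2^2
           in cmod (b2 - \<mu> * b1^2)
                = 1 / (4 * real k) * max 1 (cmod ((2 * \<mu> + of_nat k - 1) / (2 * of_nat k))))"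
proof -
  define \<nu> where "\<nu> = (2 * \<mu> + of_nat k - 1) / (2 * of_nat k)"
  have kpos: "real k > 0" using assms by simp
  have nk: "cmod (x / of_nat k) = cmod x / real k" for x :: complex
    by (simp add: norm_divide)
  have gen: "cmod (b - \<mu> * b1^2) = cmod (a3 - \<nu> * a2^2) / real k"
    if "b1 = a2 / of_nat k" "b = a3 / of_nat k - (1/2) * (of_nat k - 1) / (of_nat k)^2 * a2^2" for a2 a3 b b1 :: complex
    using b_identity[OF assms, of a3 a2 \<mu>] that by (simp add: \<nu>_def nk)
  have part1: "cmod (a3 - \<nu> * a2^2) \<le> max 1 (cmod \<nu>) / 4" if "f \<in> class_Omega"
    and "a2 = taylor_coeff f 2" "a3 = taylor_coeff f 3" for f a2 a3
  proof -
    have "cmod (a3 - \<nu> * a2^2) \<le> cmod a3 + cmod \<nu> * cmod a2 ^ 2"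
      by (metis norm_triangle_ineq4 norm_mult norm_power)
    also have "\<dots> \<le> max 1 (cmod \<nu>) / 4"
      using omega_bound[OF that(1)] that(2,3) by (intro real_ineq) auto
    finally show ?thesis .
  qed
  show ?thesis
  proof (intro conjI ballI)
    fix f assume f: "f \<in> class_Omega"
    show "let a2 = taylor_coeff f 2; a3 = taylor_coeff f 3;
               b1 = a2 / of_nat k;
               b2 = a3 / of_nat k - (1/2) * (of_nat k - 1) / (of_nat k)^2 * a2^2
           in cmod (b2 - \<mu> * b1^2)
                \<le> 1 / (4 * real k) * max 1 (cmod ((2 * \<mu> + of_nat k - 1) / (2 * of_nat k)))"
      unfolding Let_def \<nu>_def[symmetric]
      apply (subst gen[OF refl refl])
      using part1[OF f refl refl] kpos by (simp add: divide_right_mono field_simps)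
  next
    show "\<exists>f\<in>class_Omega.
           let a2 = taylor_coeff f 2; a3 = taylor_coeff f 3;
               b1 = a2 / of_nat k;
               b2 = a3 / of_nat k - (1/2) * (of_nat k - 1) / (of_nat k)^2 * a2^2
           in cmod (b2 - \<mu> * b1^2)
                = 1 / (4 * real k) * max 1 (cmod ((2 * \<mu> + of_nat k - 1) / (2 * of_nat k)))"
    proof (cases "cmod \<nu> \<ge> 1")
      case True
      show ?thesis
        by (rule bexI[OF _ ex1_Omega], unfold Let_def \<nu>_def[symmetric], subst gen[OF refl refl])
          (use True kpos in \<open>simp add: ex1_tc norm_mult norm_divide power2_eq_square max_def\<close>)
    next
      case False
      show ?thesis
        by (rule bexI[OF _ ex2_Omega], unfold Let_def \<nu>_def[symmetric], subst gen[OF refl refl])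
          (use False kpos in \<open>simp add: ex2_tc norm_mult norm_divide max_def\<close>)
    qed
  qed
qed
end
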